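(* Let $n\ge2$, let $\pi$ be a permutation of $\{1,\dots,n\}$ and let $T_0$ be the tagged Kuhn simplex $[0,e_{\pi(1)},e_{\pi(1)}+e_{\pi(2)},\dots,e_{\pi(1)}+\dots+e_{\pi(n)}]_n$, where $e_1,\dots,e_n$ are the unit vectors of $\mathbb R^n$. Then every simplex $T$ obtained from $T_0$ by successive applications of Maubach's bisection satisfies $\gamma(T)\le2\gamma(T_0)$.
   Context: Maubach's bisection of a tagged simplex $[v_0,\dots,v_n]_\gamma$, $\gamma\in\{1,\dots,n\}$: with $v'=(v_0+v_\gamma)/2$ and $\gamma'=\gamma-1$ if $\gamma\ge2$, $\gamma'=n$ if $\gamma=1$, the children are $[v_0,\dots,v_{\gamma-1},v',v_{\gamma+1},\dots,v_n]_{\gamma'}$ and $[v_1,\dots,v_\gamma,v',v_{\gamma+1},\dots,v_n]_{\gamma'}$. For a simplex $S$, $\gamma(S)=R(S)/r(S)$ with $R(S)$ the diameter of the smallest ball containing $S$ and $r(S)$ the diameter of the largest ball contained in $S$. *)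

theory Defs
  imports "HOL-Analysis.Analysis"
begin

text \<open>A tagged simplex \<open>[v_0,...,v_n]_g\<close> in \<open>\<real>^n\<close> (n = CARD('n)) is represented as a pair
  (list of the n+1 vertices [v_0,...,v_n], tag g) with g in {1..n}.\<close>

type_synonym 'n tsimplex = "(real ^ 'n) list \<times> nat"

definition maubach_children :: "'n::finite tsimplex \<Rightarrow> 'n tsimplex set" where
  "maubach_children T = (let vs = fst T; g = snd T; n = CARD('n);
      v' = (1/2) *\<^sub>R (vs ! 0 + vs ! g);
      g' = (if g \<ge> 2 then g - 1 else n)
    in { (take g vs @ [v'] @ drop (g+1) vs, g'),
         (take g (drop 1 vs) @ [v'] @ drop (g+1) vs, g') })"

inductive_set maubach_desc :: "'n::finite tsimplex \<Rightarrow> 'n tsimplex set" for T0 where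
  base: "T0 \<in> maubach_desc T0"
| step: "T \<in> maubach_desc T0 \<Longrightarrow> T' \<in> maubach_children T \<Longrightarrow> T' \<in> maubach_desc T0"

definition simplex_of :: "'n::finite tsimplex \<Rightarrow> (real ^ 'n) set" where
  "simplex_of T = convex hull (set (fst T))"

definition outer_diam :: "(real ^ 'n::finite) set \<Rightarrow> real" where
  "outer_diam S = Inf {2 * \<rho> | c \<rho>. S \<subseteq> cball c \<rho>}"

definition inner_diam :: "(real ^ 'n::finite) set \<Rightarrow> real" where
  "inner_diam S = Sup {2 * \<rho> | c \<rho>. \<rho> \<ge> 0 \<and> cball c \<rho> \<subseteq> S}"

definition shape_gamma :: "(real ^ 'n::finite) set \<Rightarrow> real" where
  "shape_gamma S = outer_diam S / inner_diam S"

definition kuhn_vertices :: "(nat \<Rightarrow> 'n::finite) \<Rightarrow> (real ^ 'n) list" where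
  "kuhn_vertices \<pi> = map (\<lambda>k. \<Sum>j=1..k. axis (\<pi> j) 1) [0..<CARD('n)+1]"

end

theory Submission
  imports Defs
begin

lemma cInf_scale:
  fixes A :: "real set"
  assumes "h > 0" "A \<noteq> {}" "bdd_below A"
  shows "Inf ((\<lambda>t. h*t) ` A) = h * Inf A"
proof (rule antisym)
  have bb: "bdd_below ((\<lambda>t. h*t) ` A)"
    using assms(3) assms(1) unfolding bdd_below_def
    by (metis (no_types, lifting) image_iff mult_left_mono less_imp_le)
  have "Inf ((\<lambda>t. h*t) ` A) / h \<le> Inf A"
  proof (rule cInf_greatest[OF assms(2)])
    fix a assume "a \<in> A"
    then have "Inf ((\<lambda>t. h*t) ` A) \<le> h * a" using cInf_lower[OF _ bb] by blast
    then show "Inf ((\<lambda>t. h*t) ` A) / h \<le> a" using assms(1) by (simp add: divide_le_eq mult.commute)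
  qed
  then show "Inf ((\<lambda>t. h*t) ` A) \<le> h * Inf A" using assms(1) by (simp add: divide_le_eq mult.commute)
  show "h * Inf A \<le> Inf ((\<lambda>t. h*t) ` A)"
  proof (rule cInf_greatest)
    show "(\<lambda>t. h*t) ` A \<noteq> {}" using assms(2) by blast
    fix y assume "y \<in> (\<lambda>t. h*t) ` A"
    then obtain a where a: "a \<in> A" "y = h*a" by blast
    have "Inf A \<le> a" using cInf_lower[OF a(1) assms(3)] .
    then show "h * Inf A \<le> y" using a(2) assms(1) by simp
  qed
qed

lemma cSup_scale:
  fixes A :: "real set"
  assumes "h > 0" "A \<noteq> {}" "bdd_above A"
  shows "Sup ((\<lambda>t. h*t) ` A) = h * Sup A"
proof (rule antisym)
  have bb: "bdd_above ((\<lambda>t. h*t) ` A)"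
    using assms(3) assms(1) unfolding bdd_above_def
    by (metis (no_types, lifting) image_iff mult_left_mono less_imp_le)
  have "Sup A \<le> Sup ((\<lambda>t. h*t) ` A) / h"
  proof (rule cSup_least[OF assms(2)])
    fix a assume "a \<in> A"
    then have "h * a \<le> Sup ((\<lambda>t. h*t) ` A)" using cSup_upper[OF _ bb] by blast
    then show "a \<le> Sup ((\<lambda>t. h*t) ` A) / h" using assms(1) by (simp add: le_divide_eq mult.commute)
  qed
  then show "h * Sup A \<le> Sup ((\<lambda>t. h*t) ` A)" using assms(1) by (simp add: le_divide_eq mult.commute)
  show "Sup ((\<lambda>t. h*t) ` A) \<le> h * Sup A"
  proof (rule cSup_least)
    show "(\<lambda>t. h*t) ` A \<noteq> {}" using assms(2) by blast
    fix y assume "y \<in> (\<lambda>t. h*t) ` A"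
    then obtain a where a: "a \<in> A" "y = h*a" by blast
    have "a \<le> Sup A" using cSup_upper[OF a(1) assms(3)] .
    then show "y \<le> h * Sup A" using a(2) assms(1) by simp
  qed
qed

lemma outer_set_ne:
  fixes S :: "(real^'n::finite) set"
  assumes "bounded S"
  shows "{2 * \<rho> | c \<rho>. S \<subseteq> cball c \<rho>} \<noteq> {}"
  using assms unfolding bounded_subset_cball by blast

lemma outer_set_bdd:
  fixes S :: "(real^'n::finite) set"
  assumes "S \<noteq> {}"
  shows "bdd_below {2 * \<rho> | c \<rho>. S \<subseteq> cball c \<rho>}"
proof (rule bdd_belowI)
  obtain y where y: "y \<in> S" using assms by blast
  fix t assume "t \<in> {2 * \<rho> | c \<rho>. S \<subseteq> cball c \<rho>}"
  then obtain c \<rho> where t: "t = 2*\<rho>" and sub: "S \<subseteq> cball c \<rho>" by blast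
  have "dist c y \<le> \<rho>" using sub y by auto
  moreover have "0 \<le> dist c y" by simp
  ultimately show "0 \<le> t" using t by linarith
qed

lemma inner_set_ne:
  fixes S :: "(real^'n::finite) set"
  assumes "S \<noteq> {}"
  shows "{2 * \<rho> | c \<rho>. \<rho> \<ge> 0 \<and> cball c \<rho> \<subseteq> S} \<noteq> {}"
proof -
  obtain y where "y \<in> S" using assms by blast
  then have "cball y 0 \<subseteq> S" by simp
  then show ?thesis by blast
qed

lemma inner_set_bdd:
  fixes S :: "(real^'n::finite) set"
  assumes "bounded S"
  shows "bdd_above {2 * \<rho> | c \<rho>. \<rho> \<ge> 0 \<and> cball c \<rho> \<subseteq> S}"
proof -
  obtain B x0 where B: "S \<subseteq> cball x0 B" using assms unfolding bounded_subset_cball by blast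
  show ?thesis
  proof (rule bdd_aboveI)
    fix t assume "t \<in> {2 * \<rho> | c \<rho>. \<rho> \<ge> 0 \<and> cball c \<rho> \<subseteq> S}"
    then obtain c \<rho> where t: "t = 2*\<rho>" and r: "\<rho> \<ge> 0" and sub: "cball c \<rho> \<subseteq> S" by blast
    have "cball c \<rho> \<subseteq> cball x0 B" using sub B by (rule order_trans)
    then have "dist c x0 + \<rho> \<le> B \<or> \<rho> < 0" using cball_subset_cball_iff[of c \<rho> x0 B] by blast
    then have "\<rho> \<le> B" using r zero_le_dist[of c x0] by linarith
    then show "t \<le> 2*B" using t by linarith
  qed
qed

lemma outer_mono:
  fixes S S' :: "(real^'n::finite) set"
  assumes "S \<subseteq> S'" "S \<noteq> {}" "bounded S'"
  shows "outer_diam S \<le> outer_diam S'"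
  unfolding outer_diam_def
  apply (rule cInf_superset_mono[OF outer_set_ne[OF assms(3)] outer_set_bdd[OF assms(2)]])
  using assms(1) by blast

lemma inner_mono:
  fixes S S' :: "(real^'n::finite) set"
  assumes "S \<subseteq> S'" "S \<noteq> {}" "bounded S'"
  shows "inner_diam S \<le> inner_diam S'"
  unfolding inner_diam_def
  apply (rule cSup_subset_mono[OF inner_set_ne[OF assms(2)] inner_set_bdd[OF assms(3)]])
  using assms(1) by blast

lemma outer_nonneg:
  fixes S :: "(real^'n::finite) set"
  assumes "S \<noteq> {}" "bounded S"
  shows "0 \<le> outer_diam S"
  unfolding outer_diam_def
proof (rule cInf_greatest[OF outer_set_ne[OF assms(2)]])
  obtain y where "y \<in> S" using assms by blast
  fix t assume "t \<in> {2 * \<rho> | c \<rho>. S \<subseteq> cball c \<rho>}"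
  then obtain c \<rho> where "t = 2*\<rho>" "S \<subseteq> cball c \<rho>" by blast
  with \<open>y \<in> S\<close> have "dist c y \<le> \<rho>" by auto
  then have "0 \<le> \<rho>" using zero_le_dist[of c y] by linarith
  then show "0 \<le> t" using \<open>t = 2*\<rho>\<close> by simp
qed

lemma inner_nonneg:
  fixes S :: "(real^'n::finite) set"
  assumes "S \<noteq> {}" "bounded S"
  shows "0 \<le> inner_diam S"
proof -
  obtain y where "y \<in> S" using assms by blast
  then have "cball y 0 \<subseteq> S" by simp
  then have "(2 * 0::real) \<in> {2 * \<rho> | c \<rho>. \<rho> \<ge> 0 \<and> cball c \<rho> \<subseteq> S}" by blast
  then have "(0::real) \<in> {2 * \<rho> | c \<rho>. \<rho> \<ge> 0 \<and> cball c \<rho> \<subseteq> S}" by simp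
  then show ?thesis unfolding inner_diam_def using cSup_upper[OF _ inner_set_bdd[OF assms(2)]] by blast
qed

lemma scale_sim:
  fixes f :: "real^'n::finite \<Rightarrow> real^'n"
  assumes h: "h > 0" and surj: "surj f" and d: "\<And>a b. dist (f a) (f b) = h * dist a b"
    and S: "S \<noteq> {}" "bounded S"
  shows "outer_diam (f ` S) = h * outer_diam S" "inner_diam (f ` S) = h * inner_diam S"
proof -
  have inj: "inj f" unfolding inj_def using d h by (metis mult_eq_0_iff dist_eq_0_iff less_irrefl)
  have img: "f ` cball c \<rho> = cball (f c) (h*\<rho>)" for c \<rho>
  proof
    show "f ` cball c \<rho> \<subseteq> cball (f c) (h * \<rho>)" using d h by (auto simp: mult_left_mono)
    show "cball (f c) (h * \<rho>) \<subseteq> f ` cball c \<rho>"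
    proof
      fix z assume z: "z \<in> cball (f c) (h * \<rho>)"
      obtain y where y: "z = f y" using surj by (metis surjD)
      then have "h * dist c y \<le> h * \<rho>" using z d by simp
      then have "dist c y \<le> \<rho>" using h by simp
      then show "z \<in> f ` cball c \<rho>" using y by auto
    qed
  qed
  have e1: "{2 * \<rho> | c \<rho>. f ` S \<subseteq> cball c \<rho>} = (\<lambda>t. h*t) ` {2 * \<rho> | c \<rho>. S \<subseteq> cball c \<rho>}"
  proof (intro equalityI subsetI)
    fix t assume "t \<in> {2 * \<rho> | c \<rho>. f ` S \<subseteq> cball c \<rho>}"
    then obtain c \<rho> where a: "f ` S \<subseteq> cball c \<rho>" and t: "t = 2*\<rho>" by blast
    obtain c0 where c0: "c = f c0" using surj by (metis surjD)
    have "S \<subseteq> cball c0 (\<rho>/h)"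
    proof
      fix y assume "y \<in> S"
      then have "h * dist c0 y \<le> \<rho>" using a c0 d by auto
      then show "y \<in> cball c0 (\<rho>/h)" using h by (simp add: le_divide_eq mult.commute)
    qed
    moreover have "t = h * (2*(\<rho>/h))" using h t by simp
    ultimately show "t \<in> (\<lambda>t. h*t) ` {2 * \<rho> | c \<rho>. S \<subseteq> cball c \<rho>}" by blast
  next
    fix t assume "t \<in> (\<lambda>t. h*t) ` {2 * \<rho> | c \<rho>. S \<subseteq> cball c \<rho>}"
    then obtain c \<rho> where a: "S \<subseteq> cball c \<rho>" and t: "t = h * (2*\<rho>)" by blast
    then have "f ` S \<subseteq> cball (f c) (h*\<rho>)" using img by blast
    moreover have "t = 2 * (h*\<rho>)" using t by simp
    ultimately show "t \<in> {2 * \<rho> | c \<rho>. f ` S \<subseteq> cball c \<rho>}" by blast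
  qed
  have e2: "{2 * \<rho> | c \<rho>. \<rho> \<ge> 0 \<and> cball c \<rho> \<subseteq> f ` S} = (\<lambda>t. h*t) ` {2 * \<rho> | c \<rho>. \<rho> \<ge> 0 \<and> cball c \<rho> \<subseteq> S}"
  proof (intro equalityI subsetI)
    fix t assume "t \<in> {2 * \<rho> | c \<rho>. \<rho> \<ge> 0 \<and> cball c \<rho> \<subseteq> f ` S}"
    then obtain c \<rho> where a: "cball c \<rho> \<subseteq> f ` S" "0 \<le> \<rho>" and t: "t = 2*\<rho>" by blast
    obtain c0 where c0: "c = f c0" using surj by (metis surjD)
    have "f ` cball c0 (\<rho>/h) \<subseteq> f ` S" using a img[of c0 "\<rho>/h"] c0 h by simp
    then have "cball c0 (\<rho>/h) \<subseteq> S" using inj by (simp add: inj_image_subset_iff)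
    moreover have "t = h * (2*(\<rho>/h))" using h t by simp
    moreover have "\<rho>/h \<ge> 0" using a h by simp
    ultimately show "t \<in> (\<lambda>t. h*t) ` {2 * \<rho> | c \<rho>. \<rho> \<ge> 0 \<and> cball c \<rho> \<subseteq> S}" by blast
  next
    fix t assume "t \<in> (\<lambda>t. h*t) ` {2 * \<rho> | c \<rho>. \<rho> \<ge> 0 \<and> cball c \<rho> \<subseteq> S}"
    then obtain c \<rho> where a: "cball c \<rho> \<subseteq> S" "0 \<le> \<rho>" and t: "t = h * (2*\<rho>)" by blast
    then have "cball (f c) (h*\<rho>) \<subseteq> f ` S" using img by (metis image_mono)
    moreover have "h*\<rho> \<ge> 0" using a h by simp
    moreover have "t = 2 * (h*\<rho>)" using t by simp
    ultimately show "t \<in> {2 * \<rho> | c \<rho>. \<rho> \<ge> 0 \<and> cball c \<rho> \<subseteq> f ` S}" by blast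
  qed
  show "outer_diam (f ` S) = h * outer_diam S"
    unfolding outer_diam_def e1 using cInf_scale[OF h outer_set_ne[OF S(2)] outer_set_bdd[OF S(1)]] .
  show "inner_diam (f ` S) = h * inner_diam S"
    unfolding inner_diam_def e2 using cSup_scale[OF h inner_set_ne[OF S(1)] inner_set_bdd[OF S(2)]] .
qed

fun pv :: "(nat \<Rightarrow> 'n::finite) \<Rightarrow> (nat \<Rightarrow> real) \<Rightarrow> nat \<Rightarrow> real^'n" where
  "pv \<sigma> s 0 = 0"
| "pv \<sigma> s (Suc i) = pv \<sigma> s i + s (Suc i) *\<^sub>R axis (\<sigma> (Suc i)) 1"

lemma pv_sum: "pv \<sigma> s k = (\<Sum>j=1..k. s j *\<^sub>R axis (\<sigma> j) 1)"
  by (induction k) (auto simp: sum.atLeast1_atMost_eq)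

definition Kset :: "real^'n::finite \<Rightarrow> real \<Rightarrow> (nat \<Rightarrow> 'n) \<Rightarrow> (nat \<Rightarrow> real) \<Rightarrow> (real^'n) set" where
  "Kset x h \<sigma> s = convex hull (set (map (\<lambda>i. x + h *\<^sub>R pv \<sigma> s i) [0..<CARD('n)+1]))"

lemma kuhn_scaled:
  fixes \<pi> \<sigma> :: "nat \<Rightarrow> 'n::finite"
  assumes pi: "bij_betw \<pi> {1..CARD('n)} UNIV" and sg: "bij_betw \<sigma> {1..CARD('n)} UNIV"
    and s: "\<And>j. s j = 1 \<or> s j = -1" and h: "h > 0"
  shows "\<exists>f. surj f \<and> (\<forall>a b. dist (f a) (f b) = h * dist a b) \<and>
             Kset x h \<sigma> s = f ` (convex hull (set (kuhn_vertices \<pi>)))"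
proof -
  define n where "n = CARD('n)"
  define \<tau> where "\<tau> = inv_into {1..n} \<sigma>"
  have tau: "bij_betw \<tau> UNIV {1..n}" unfolding \<tau>_def n_def using sg by (rule bij_betw_inv_into)
  have pt: "bij_betw (\<pi> \<circ> \<tau>) UNIV UNIV" using bij_betw_trans[OF tau] pi n_def by blast
  define L :: "real^'n \<Rightarrow> real^'n" where "L y = (\<chi> k. s (\<tau> k) * y $ \<pi> (\<tau> k))" for y
  have lin: "linear L" unfolding L_def by (simp add: linear_iff vec_eq_iff algebra_simps)
  have s2: "s j * s j = 1" for j using s[of j] by auto
  have nrm: "norm (L y) = norm y" for y
  proof -
    have "L y \<bullet> L y = (\<Sum>k\<in>UNIV. (s (\<tau> k) * s (\<tau> k)) * (y $ \<pi> (\<tau> k) * y $ \<pi> (\<tau> k)))"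
      unfolding L_def inner_vec_def by (simp add: algebra_simps)
    also have "\<dots> = (\<Sum>k\<in>UNIV. (\<lambda>m. y $ m * y $ m) ((\<pi> \<circ> \<tau>) k))" by (simp add: s2)
    also have "\<dots> = (\<Sum>m\<in>UNIV. y $ m * y $ m)" by (rule sum.reindex_bij_betw[OF pt])
    also have "\<dots> = y \<bullet> y" unfolding inner_vec_def by simp
    finally show ?thesis by (simp add: norm_eq_sqrt_inner)
  qed
  have ot: "orthogonal_transformation L" using lin nrm orthogonal_transformation by blast
  have surjL: "surj L" using orthogonal_transformation_surj[OF ot] .
  have Lax: "L (axis (\<pi> j) 1) = s j *\<^sub>R axis (\<sigma> j) 1" if j: "j \<in> {1..n}" for j
  proof -
    have "(\<pi> (\<tau> k) = \<pi> j) \<longleftrightarrow> (k = \<sigma> j)" for k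
    proof -
      have tk: "\<tau> k \<in> {1..n}" using tau by (auto simp: bij_betw_def)
      have "(\<pi> (\<tau> k) = \<pi> j) \<longleftrightarrow> \<tau> k = j" using pi tk j unfolding n_def bij_betw_def inj_on_def by blast
      also have "\<dots> \<longleftrightarrow> k = \<sigma> j"
      proof
        assume "\<tau> k = j"
        then show "k = \<sigma> j" unfolding \<tau>_def using sg n_def by (metis UNIV_I bij_betw_def f_inv_into_f)
      next
        assume "k = \<sigma> j"
        then show "\<tau> k = j" unfolding \<tau>_def using sg j n_def by (metis bij_betw_def inv_into_f_f)
      qed
      finally show ?thesis .
    qed
    moreover have "\<tau> (\<sigma> j) = j" unfolding \<tau>_def using sg j n_def by (metis bij_betw_def inv_into_f_f)
    ultimately show ?thesis unfolding L_def by (auto simp: vec_eq_iff axis_def)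
  qed
  have Lkv: "L (\<Sum>j=1..k. axis (\<pi> j) 1) = pv \<sigma> s k" if "k \<le> n" for k
  proof -
    have "L (\<Sum>j=1..k. axis (\<pi> j) 1) = (\<Sum>j=1..k. L (axis (\<pi> j) 1))" using lin by (simp add: linear_sum)
    also have "\<dots> = (\<Sum>j=1..k. s j *\<^sub>R axis (\<sigma> j) 1)" using that by (intro sum.cong) (auto simp: Lax)
    finally show ?thesis by (simp add: pv_sum)
  qed
  define f where "f y = x + h *\<^sub>R L y" for y
  have sf: "surj f"
  proof -
    have "z \<in> range f" for z
    proof -
      obtain y where "L y = (1/h) *\<^sub>R (z - x)" using surjL by (metis surjD)
      then have "f y = z" unfolding f_def using h by simp
      then show ?thesis by blast
    qed
    then show ?thesis by blast
  qed
  have df: "\<forall>a b. dist (f a) (f b) = h * dist a b"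
  proof (intro allI)
    fix a b
    have e: "L (a - b) = L a - L b" by (rule linear_diff[OF lin])
    have "f a - f b = h *\<^sub>R (L a - L b)" unfolding f_def by (simp add: algebra_simps)
    then have "f a - f b = h *\<^sub>R L (a - b)" by (simp only: e)
    then have "norm (f a - f b) = \<bar>h\<bar> * norm (L (a - b))" by (simp only: norm_scaleR)
    then have "norm (f a - f b) = h * norm (a - b)" using h nrm[of "a - b"] by simp
    then show "dist (f a) (f b) = h * dist a b" by (simp add: dist_norm)
  qed
  have kf: "Kset x h \<sigma> s = f ` (convex hull (set (kuhn_vertices \<pi>)))"
  proof -
    have "f ` (convex hull (set (kuhn_vertices \<pi>))) = (\<lambda>v. x + h *\<^sub>R v) ` (L ` (convex hull (set (kuhn_vertices \<pi>))))"
      unfolding image_image f_def by (rule refl)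
    also have "\<dots> = convex hull ((\<lambda>v. x + h *\<^sub>R v) ` (L ` set (kuhn_vertices \<pi>)))"
      unfolding convex_hull_linear_image[OF lin] by (rule convex_hull_affinity[symmetric])
    finally have e1: "f ` (convex hull (set (kuhn_vertices \<pi>))) = convex hull ((\<lambda>v. x + h *\<^sub>R v) ` (L ` set (kuhn_vertices \<pi>)))" .
    have e3: "(\<lambda>v. x + h *\<^sub>R v) ` (L ` set (kuhn_vertices \<pi>)) = set (map (\<lambda>i. x + h *\<^sub>R pv \<sigma> s i) [0..<CARD('n)+1])"
    proof -
      have "(\<lambda>v. x + h *\<^sub>R v) ` (L ` set (kuhn_vertices \<pi>)) = (\<lambda>k. x + h *\<^sub>R L (\<Sum>j=1..k. axis (\<pi> j) 1)) ` {0..<n+1}"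
        unfolding kuhn_vertices_def n_def by (simp only: set_map set_upt image_image)
      also have "\<dots> = (\<lambda>k. x + h *\<^sub>R pv \<sigma> s k) ` {0..<n+1}"
      proof (rule image_cong)
        fix k assume "k \<in> {0..<n+1}"
        then have "k \<le> n" by simp
        then show "x + h *\<^sub>R L (\<Sum>j=1..k. axis (\<pi> j) 1) = x + h *\<^sub>R pv \<sigma> s k" using Lkv[of k] by simp
      qed simp
      finally show ?thesis unfolding n_def by (simp only: set_map set_upt)
    qed
    show ?thesis unfolding Kset_def e1 e3 by (rule refl)
  qed
  show ?thesis by (rule exI[of _ f]) (intro conjI sf df kf)
qed

definition good :: "'n::finite tsimplex \<Rightarrow> real^'n \<Rightarrow> real \<Rightarrow> (nat \<Rightarrow> 'n) \<Rightarrow> (nat \<Rightarrow> real) \<Rightarrow> bool" where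
  "good T x h \<sigma> s \<longleftrightarrow> h > 0 \<and> bij_betw \<sigma> {1..CARD('n)} UNIV \<and> (\<forall>j. s j = 1 \<or> s j = -1) \<and>
     1 \<le> snd T \<and> snd T \<le> CARD('n) \<and>
     fst T = map (\<lambda>i. x + (if i \<le> snd T then h else h/2) *\<^sub>R pv \<sigma> s i) [0..<CARD('n)+1]"

definition sh_sig :: "nat \<Rightarrow> (nat \<Rightarrow> 'n) \<Rightarrow> nat \<Rightarrow> 'n" where
  "sh_sig g \<sigma> j = (if j < g then \<sigma> (j+1) else if j = g then \<sigma> 1 else \<sigma> j)"

definition sh_s :: "nat \<Rightarrow> (nat \<Rightarrow> real) \<Rightarrow> nat \<Rightarrow> real" where
  "sh_s g s j = (if j < g then s (j+1) else if j = g then - s 1 else s j)"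

lemma pv_shift1:
  "i < g \<Longrightarrow> pv (sh_sig g \<sigma>) (sh_s g s) i = pv \<sigma> s (i+1) - s 1 *\<^sub>R axis (\<sigma> 1) 1"
proof (induction i)
  case 0
  then show ?case by simp
next
  case (Suc i)
  then have "pv (sh_sig g \<sigma>) (sh_s g s) i = pv \<sigma> s (i+1) - s 1 *\<^sub>R axis (\<sigma> 1) 1" by simp
  moreover have "sh_sig g \<sigma> (Suc i) = \<sigma> (Suc (Suc i))" "sh_s g s (Suc i) = s (Suc (Suc i))"
    using Suc.prems by (auto simp: sh_sig_def sh_s_def)
  ultimately show ?case by (simp add: algebra_simps)
qed

lemma vec_aux:
  fixes A P e :: "'a::real_vector"
  assumes a: "A = P - c *\<^sub>R e"
  shows "A + (-c) *\<^sub>R e = P - (2*c) *\<^sub>R e"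
proof -
  have "A + (-c) *\<^sub>R e = (P - c *\<^sub>R e) - c *\<^sub>R e" using a by simp
  also have "\<dots> = P - (c *\<^sub>R e + c *\<^sub>R e)" by (rule diff_diff_eq)
  also have "c *\<^sub>R e + c *\<^sub>R e = (2*c) *\<^sub>R e" by (simp only: mult_2 scaleR_add_left)
  finally show ?thesis .
qed

lemma pv_shift2:
  assumes "1 \<le> g" "g \<le> i"
  shows "pv (sh_sig g \<sigma>) (sh_s g s) i = pv \<sigma> s i - (2 * s 1) *\<^sub>R axis (\<sigma> 1) 1"
  using assms(2)
proof (induction i)
  case 0
  then show ?case using assms(1) by simp
next
  case (Suc i)
  show ?case
  proof (cases "Suc i = g")
    case True
    have h1: "pv (sh_sig g \<sigma>) (sh_s g s) i = pv \<sigma> s (Suc i) - s 1 *\<^sub>R axis (\<sigma> 1) 1"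
      using True pv_shift1[of i g \<sigma> s] by simp
    have q1: "sh_sig g \<sigma> (Suc i) = \<sigma> 1" "sh_s g s (Suc i) = - s 1"
      using True by (auto simp: sh_sig_def sh_s_def)
    have E: "pv (sh_sig g \<sigma>) (sh_s g s) (Suc i) = pv (sh_sig g \<sigma>) (sh_s g s) i + sh_s g s (Suc i) *\<^sub>R axis (sh_sig g \<sigma> (Suc i)) 1" by (simp only: pv.simps)
    show ?thesis unfolding E q1 by (rule vec_aux[OF h1])
  next
    case False
    then have "g \<le> i" using Suc.prems by simp
    then have "pv (sh_sig g \<sigma>) (sh_s g s) i = pv \<sigma> s i - (2 * s 1) *\<^sub>R axis (\<sigma> 1) 1" using Suc.IH by simp
    moreover have "sh_sig g \<sigma> (Suc i) = \<sigma> (Suc i)" "sh_s g s (Suc i) = s (Suc i)"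
      using False Suc.prems by (auto simp: sh_sig_def sh_s_def)
    ultimately show ?thesis by (simp add: algebra_simps)
  qed
qed

lemma sh_sig_bij:
  fixes \<sigma> :: "nat \<Rightarrow> 'n::finite"
  assumes "bij_betw \<sigma> {1..CARD('n)} UNIV" "1 \<le> g" "g \<le> CARD('n)"
  shows "bij_betw (sh_sig g \<sigma>) {1..CARD('n)} UNIV"
proof -
  have surj: "sh_sig g \<sigma> ` {1..CARD('n)} = UNIV"
  proof (intro equalityI subsetI)
    fix u :: 'n
    obtain k where k: "k \<in> {1..CARD('n)}" "u = \<sigma> k" using assms(1) unfolding bij_betw_def by blast
    show "u \<in> sh_sig g \<sigma> ` {1..CARD('n)}"
    proof (cases "k = 1")
      case True
      then have "sh_sig g \<sigma> g = u" using k by (simp add: sh_sig_def)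
      then show ?thesis using assms(2,3) by force
    next
      case False
      show ?thesis
      proof (cases "k \<le> g")
        case True
        moreover have "k - 1 < g" using True False k by auto
        ultimately have "sh_sig g \<sigma> (k - 1) = u" using k False by (simp add: sh_sig_def)
        moreover have "k - 1 \<in> {1..CARD('n)}" using k False by auto
        ultimately show ?thesis by force
      next
        case F2: False
        then have "sh_sig g \<sigma> k = u" using k by (simp add: sh_sig_def)
        then show ?thesis using k by force
      qed
    qed
  qed simp
  have "card (sh_sig g \<sigma> ` {1..CARD('n)}) = card {1..CARD('n)}" using surj by simp
  then have "inj_on (sh_sig g \<sigma>) {1..CARD('n)}" by (intro eq_card_imp_inj_on) auto
  then show ?thesis using surj unfolding bij_betw_def by blast
qed

lemma list1_nth:
  assumes "g < length vs" "i < length vs"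
  shows "(take g vs @ [v'] @ drop (g+1) vs) ! i = (if i < g then vs!i else if i = g then v' else vs!i)"
  using assms by (auto simp: nth_append min_def)

lemma list2_nth:
  assumes "1 \<le> g" "g < length vs" "i < length vs"
  shows "(take g (drop 1 vs) @ [v'] @ drop (g+1) vs) ! i = (if i < g then vs!(i+1) else if i = g then v' else vs!i)"
  using assms by (auto simp: nth_append min_def)

lemma list1_len: "g < length vs \<Longrightarrow> length (take g vs @ [v'] @ drop (g+1) vs) = length vs"
  by simp

lemma list2_len: "1 \<le> g \<Longrightarrow> g < length vs \<Longrightarrow> length (take g (drop 1 vs) @ [v'] @ drop (g+1) vs) = length vs"
  by simp

lemma va1:
  fixes x P e :: "real^'n::finite"
  shows "x + (h*c) *\<^sub>R e + h *\<^sub>R (P - c *\<^sub>R e) = x + h *\<^sub>R P"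
  by (simp add: vec_eq_iff algebra_simps)

lemma va2:
  fixes x P e :: "real^'n::finite"
  shows "x + (h*c) *\<^sub>R e + (h/2) *\<^sub>R (P - (2*c) *\<^sub>R e) = x + (h/2) *\<^sub>R P"
  by (simp add: vec_eq_iff algebra_simps)

lemma va3:
  fixes x P :: "real^'n::finite"
  shows "(1/2) *\<^sub>R (x + (x + h *\<^sub>R P)) = x + (h/2) *\<^sub>R P"
  by (simp add: vec_eq_iff algebra_simps)

lemma good_child:
  fixes T :: "'n::finite tsimplex"
  assumes g: "good T x h \<sigma> s" and T': "T' \<in> maubach_children T"
  shows "\<exists>x' h' \<sigma>' s'. good T' x' h' \<sigma>' s'"
proof -
  define n where "n = CARD('n)"
  define \<gamma> where "\<gamma> = snd T"
  define vs where "vs = fst T"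
  have h: "h > 0" and sg: "bij_betw \<sigma> {1..n} UNIV" and sv: "\<forall>j. s j = 1 \<or> s j = -1"
    and g1: "1 \<le> \<gamma>" and gn: "\<gamma> \<le> n"
    and vsd: "vs = map (\<lambda>i. x + (if i \<le> \<gamma> then h else h/2) *\<^sub>R pv \<sigma> s i) [0..<n+1]"
    using g unfolding good_def n_def \<gamma>_def vs_def by auto
  have len: "length vs = n+1" using vsd by simp
  have vsn: "vs ! i = x + (if i \<le> \<gamma> then h else h/2) *\<^sub>R pv \<sigma> s i" if "i \<le> n" for i
    using that vsd by (simp del: upt_Suc)
  have v0: "vs ! 0 = x" using vsn[of 0] by simp
  have vg: "vs ! \<gamma> = x + h *\<^sub>R pv \<sigma> s \<gamma>" using vsn[of \<gamma>] gn by simp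
  define v' where "v' = (1/2) *\<^sub>R (vs ! 0 + vs ! \<gamma>)"
  have v': "v' = x + (h/2) *\<^sub>R pv \<sigma> s \<gamma>" unfolding v'_def v0 vg by (rule va3)
  define g' where "g' = (if \<gamma> \<ge> 2 then \<gamma> - 1 else n)"
  have T'c: "T' = (take \<gamma> vs @ [v'] @ drop (\<gamma>+1) vs, g') \<or> T' = (take \<gamma> (drop 1 vs) @ [v'] @ drop (\<gamma>+1) vs, g')"
    using T' unfolding maubach_children_def Let_def v'_def g'_def n_def \<gamma>_def vs_def by auto
  have glt: "\<gamma> < length vs" using gn len by simp
  have g'r: "1 \<le> g'" "g' \<le> n" using g1 gn unfolding g'_def by auto
  show ?thesis
  proof (cases "T' = (take \<gamma> vs @ [v'] @ drop (\<gamma>+1) vs, g')")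
    case True
    define h' where "h' = (if \<gamma> \<ge> 2 then h else h/2)"
    have coef: "(if i \<le> g' then h' else h'/2) *\<^sub>R pv \<sigma> s i = (if i < \<gamma> then h else h/2) *\<^sub>R pv \<sigma> s i"
      if "i \<le> n" for i
    proof (cases "\<gamma> \<ge> 2")
      case True
      then show ?thesis unfolding g'_def h'_def by auto
    next
      case False
      then have "\<gamma> = 1" using g1 by simp
      then show ?thesis unfolding g'_def h'_def using that by (cases "i = 0") auto
    qed
    have "fst T' = map (\<lambda>i. x + (if i \<le> g' then h' else h'/2) *\<^sub>R pv \<sigma> s i) [0..<n+1]"
    proof (rule nth_equalityI)
      show "length (fst T') = length (map (\<lambda>i. x + (if i \<le> g' then h' else h'/2) *\<^sub>R pv \<sigma> s i) [0..<n+1])"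
        using True list1_len[OF glt] len by simp
      fix i assume "i < length (fst T')"
      then have i: "i < length vs" "i \<le> n" using True list1_len[OF glt] len by auto
      have "fst T' ! i = (if i < \<gamma> then vs!i else if i = \<gamma> then v' else vs!i)"
        using True list1_nth[OF glt i(1)] by simp
      also have "\<dots> = x + (if i < \<gamma> then h else h/2) *\<^sub>R pv \<sigma> s i"
        using vsn[OF i(2)] v' by auto
      also have "\<dots> = x + (if i \<le> g' then h' else h'/2) *\<^sub>R pv \<sigma> s i" by (simp only: coef[OF i(2)])
      finally show "fst T' ! i = map (\<lambda>i. x + (if i \<le> g' then h' else h'/2) *\<^sub>R pv \<sigma> s i) [0..<n+1] ! i"
        using i by (simp del: upt_Suc)
    qed
    moreover have "h' > 0" using h unfolding h'_def by auto
    ultimately have "good T' x h' \<sigma> s" unfolding good_def using True sg sv g'r n_def by auto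
    then show ?thesis by blast
  next
    case False
    then have T2: "T' = (take \<gamma> (drop 1 vs) @ [v'] @ drop (\<gamma>+1) vs, g')" using T'c by blast
    define h' where "h' = (if \<gamma> \<ge> 2 then h else h/2)"
    define e where "e = axis (\<sigma> 1) (1::real)"
    define x' where "x' = x + (h * s 1) *\<^sub>R e"
    define \<sigma>' where "\<sigma>' = sh_sig \<gamma> \<sigma>"
    define s' where "s' = sh_s \<gamma> s"
    have "fst T' = map (\<lambda>i. x' + (if i \<le> g' then h' else h'/2) *\<^sub>R pv \<sigma>' s' i) [0..<n+1]"
    proof (rule nth_equalityI)
      show "length (fst T') = length (map (\<lambda>i. x' + (if i \<le> g' then h' else h'/2) *\<^sub>R pv \<sigma>' s' i) [0..<n+1])"
        using T2 list2_len[OF g1 glt] len by simp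
      fix i assume "i < length (fst T')"
      then have i: "i < length vs" "i \<le> n" using T2 list2_len[OF g1 glt] len by auto
      have "fst T' ! i = (if i < \<gamma> then vs!(i+1) else if i = \<gamma> then v' else vs!i)"
        using T2 list2_nth[OF g1 glt i(1)] by simp
      also have "\<dots> = x' + (if i \<le> g' then h' else h'/2) *\<^sub>R pv \<sigma>' s' i"
      proof -
        consider (a) "i < \<gamma>" | (b) "i = \<gamma>" | (c) "\<gamma> < i" by linarith
        then show ?thesis
        proof cases
          case a
          have p: "pv \<sigma>' s' i = pv \<sigma> s (i+1) - s 1 *\<^sub>R e"
            unfolding \<sigma>'_def s'_def e_def using pv_shift1[OF a] .
          have l: "vs!(i+1) = x + h *\<^sub>R pv \<sigma> s (i+1)" using vsn[of "i+1"] a gn by simp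
          show ?thesis
          proof (cases "\<gamma> \<ge> 2")
            case True
            then have cf: "(if i \<le> g' then h' else h'/2) = h" unfolding g'_def h'_def using a by auto
            show ?thesis unfolding cf p x'_def va1 using a l by simp
          next
            case False
            then have "i = 0" using a by simp
            then show ?thesis using a l unfolding x'_def e_def by simp
          qed
        next
          case b
          have p: "pv \<sigma>' s' i = pv \<sigma> s i - (2 * s 1) *\<^sub>R e"
            unfolding \<sigma>'_def s'_def e_def using pv_shift2[OF g1 order_refl[of \<gamma>]] b by simp
          have cf: "(if i \<le> g' then h' else h'/2) = h/2" unfolding g'_def h'_def using b gn by auto
          show ?thesis unfolding cf p x'_def va2 using b v' by simp
        next
          case c
          have p: "pv \<sigma>' s' i = pv \<sigma> s i - (2 * s 1) *\<^sub>R e"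
            unfolding \<sigma>'_def s'_def e_def using pv_shift2[OF g1 less_imp_le[OF c]] by simp
          have cf: "(if i \<le> g' then h' else h'/2) = h/2" unfolding g'_def h'_def using c i by auto
          have "vs ! i = x + (h/2) *\<^sub>R pv \<sigma> s i" using vsn[OF i(2)] c by simp
          then show ?thesis unfolding cf p x'_def va2 using c by simp
        qed
      qed
      finally show "fst T' ! i = map (\<lambda>i. x' + (if i \<le> g' then h' else h'/2) *\<^sub>R pv \<sigma>' s' i) [0..<n+1] ! i"
        using i by (simp del: upt_Suc)
    qed
    moreover have "h' > 0" using h unfolding h'_def by auto
    moreover have "bij_betw \<sigma>' {1..n} UNIV" unfolding \<sigma>'_def n_def using sh_sig_bij sg g1 gn n_def by blast
    moreover have "\<forall>j. s' j = 1 \<or> s' j = -1" unfolding s'_def sh_s_def using sv by auto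
    ultimately have "good T' x' h' \<sigma>' s'" unfolding good_def using T2 g'r n_def by auto
    then show ?thesis by blast
  qed
qed

lemma good_T0:
  fixes \<pi> :: "nat \<Rightarrow> 'n::finite"
  assumes "bij_betw \<pi> {1..CARD('n)} UNIV"
  shows "good (kuhn_vertices \<pi>, CARD('n)) 0 1 \<pi> (\<lambda>_. 1)"
proof -
  have "kuhn_vertices \<pi> = map (\<lambda>i. 0 + (if i \<le> CARD('n) then 1 else 1/2) *\<^sub>R pv \<pi> (\<lambda>_. 1) i) [0..<CARD('n)+1]"
    unfolding kuhn_vertices_def
  proof (rule map_cong)
    fix i assume "i \<in> set [0..<CARD('n)+1]"
    then have "i \<le> CARD('n)" by auto
    then show "(\<Sum>j=1..i. axis (\<pi> j) 1) = 0 + (if i \<le> CARD('n) then 1 else 1/2) *\<^sub>R pv \<pi> (\<lambda>_. 1) i"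
      by (simp add: pv_sum)
  qed simp
  moreover have "1 \<le> CARD('n)" by (simp add: Suc_leI)
  ultimately show ?thesis unfolding good_def using assms by simp
qed

lemma good_desc:
  fixes \<pi> :: "nat \<Rightarrow> 'n::finite"
  assumes "bij_betw \<pi> {1..CARD('n)} UNIV" "T \<in> maubach_desc (kuhn_vertices \<pi>, CARD('n))"
  shows "\<exists>x h \<sigma> s. good T x h \<sigma> s"
  using assms(2)
proof (induction rule: maubach_desc.induct)
  case base
  then show ?case using good_T0[OF assms(1)] by blast
next
  case (step T T')
  then show ?case using good_child by blast
qed

lemma good_sub1:
  fixes T :: "'n::finite tsimplex"
  assumes g: "good T x h \<sigma> s"
  shows "simplex_of T \<subseteq> Kset x h \<sigma> s"
proof -
  define P where "P = set (map (\<lambda>i. x + h *\<^sub>R pv \<sigma> s i) [0..<CARD('n)+1])"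
  have fT: "fst T = map (\<lambda>i. x + (if i \<le> snd T then h else h/2) *\<^sub>R pv \<sigma> s i) [0..<CARD('n)+1]"
    using g unfolding good_def by blast
  have "set (fst T) \<subseteq> convex hull P"
  proof
    fix v assume "v \<in> set (fst T)"
    then obtain i where i0: "i \<in> set [0..<CARD('n)+1]" and iv: "v = x + (if i \<le> snd T then h else h/2) *\<^sub>R pv \<sigma> s i"
      unfolding fT set_map by blast
    have i: "i \<le> CARD('n)" "v = x + (if i \<le> snd T then h else h/2) *\<^sub>R pv \<sigma> s i" using i0 iv by auto
    have mem: "i \<in> set [0..<CARD('n)+1]" using i(1) by (simp del: upt_Suc)
    have p1: "x + h *\<^sub>R pv \<sigma> s i \<in> convex hull P" unfolding P_def set_map
      by (rule hull_inc, rule image_eqI[OF _ mem]) simp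
    have p0: "x \<in> convex hull P" unfolding P_def
      by (intro hull_inc) (force intro: image_eqI[where x=0])
    show "v \<in> convex hull P"
    proof (cases "i \<le> snd T")
      case True
      then show ?thesis using i p1 by simp
    next
      case False
      have "(1 - 1/2) *\<^sub>R x + (1/2) *\<^sub>R (x + h *\<^sub>R pv \<sigma> s i) \<in> convex hull P"
        by (rule convexD_alt[OF convex_convex_hull p0 p1]) auto
      moreover have "(1 - 1/2) *\<^sub>R x + (1/2) *\<^sub>R (x + h *\<^sub>R pv \<sigma> s i) = v"
        using i False by (simp add: vec_eq_iff algebra_simps)
      ultimately show ?thesis by simp
    qed
  qed
  then show ?thesis unfolding simplex_of_def Kset_def P_def
    by (intro hull_minimal) (auto simp: convex_convex_hull)
qed

lemma good_sub2:
  fixes T :: "'n::finite tsimplex"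
  assumes g: "good T x h \<sigma> s"
  shows "Kset x (h/2) \<sigma> s \<subseteq> simplex_of T"
proof -
  define Q where "Q = set (fst T)"
  have fT: "fst T = map (\<lambda>i. x + (if i \<le> snd T then h else h/2) *\<^sub>R pv \<sigma> s i) [0..<CARD('n)+1]"
    using g unfolding good_def by blast
  have q0: "x \<in> convex hull Q" unfolding Q_def fT
    by (intro hull_inc) (force intro: image_eqI[where x=0])
  have "set (map (\<lambda>i. x + (h/2) *\<^sub>R pv \<sigma> s i) [0..<CARD('n)+1]) \<subseteq> convex hull Q"
  proof
    fix v assume "v \<in> set (map (\<lambda>i. x + (h/2) *\<^sub>R pv \<sigma> s i) [0..<CARD('n)+1])"
    then obtain i where i0: "i \<in> set [0..<CARD('n)+1]" and iv: "v = x + (h/2) *\<^sub>R pv \<sigma> s i"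
      unfolding set_map by blast
    have i: "i \<le> CARD('n)" "v = x + (h/2) *\<^sub>R pv \<sigma> s i" using i0 iv by auto
    have mem: "i \<in> set [0..<CARD('n)+1]" using i(1) by (simp del: upt_Suc)
    have qi: "x + (if i \<le> snd T then h else h/2) *\<^sub>R pv \<sigma> s i \<in> convex hull Q" unfolding Q_def fT set_map
      by (rule hull_inc, rule image_eqI[OF _ mem]) simp
    show "v \<in> convex hull Q"
    proof (cases "i \<le> snd T")
      case False
      then show ?thesis using i qi by simp
    next
      case True
      have "(1 - 1/2) *\<^sub>R x + (1/2) *\<^sub>R (x + h *\<^sub>R pv \<sigma> s i) \<in> convex hull Q"
        by (rule convexD_alt[OF convex_convex_hull q0]) (use qi True in auto)
      moreover have "(1 - 1/2) *\<^sub>R x + (1/2) *\<^sub>R (x + h *\<^sub>R pv \<sigma> s i) = v"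
        using i by (simp add: vec_eq_iff algebra_simps)
      ultimately show ?thesis by simp
    qed
  qed
  then show ?thesis unfolding simplex_of_def Kset_def Q_def
    by (intro hull_minimal) (auto simp: convex_convex_hull)
qed

lemma Kset_ne_bdd: "Kset x h \<sigma> s \<noteq> {}" "bounded (Kset x h \<sigma> s)"
  unfolding Kset_def
  by (auto simp: finite_imp_bounded_convex_hull)

theorem lemmaA2:
  fixes \<pi> :: "nat \<Rightarrow> 'n::finite" and T :: "'n tsimplex"
  assumes "CARD('n) \<ge> 2"
    and "bij_betw \<pi> {1..CARD('n)} UNIV"
    and "T \<in> maubach_desc (kuhn_vertices \<pi>, CARD('n))"
  shows "shape_gamma (simplex_of T) \<le> 2 * shape_gamma (simplex_of (kuhn_vertices \<pi>, CARD('n)))"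
proof -
  define S0 where "S0 = convex hull (set (kuhn_vertices \<pi>))"
  have S0e: "simplex_of (kuhn_vertices \<pi>, CARD('n)) = S0" unfolding simplex_of_def S0_def by simp
  have S0ne: "S0 \<noteq> {}" unfolding S0_def kuhn_vertices_def by simp
  have S0b: "bounded S0" unfolding S0_def by (simp add: finite_imp_bounded_convex_hull)
  obtain x h \<sigma> s where g: "good T x h \<sigma> s" using good_desc[OF assms(2,3)] by blast
  have h: "h > 0" and sg: "bij_betw \<sigma> {1..CARD('n)} UNIV" and sv: "\<And>j. s j = 1 \<or> s j = -1"
    using g unfolding good_def by auto
  define R0 where "R0 = outer_diam S0"
  define r0 where "r0 = inner_diam S0"
  have K1: "outer_diam (Kset x h \<sigma> s) = h * R0" "inner_diam (Kset x h \<sigma> s) = h * r0"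
  proof -
    obtain f where f: "surj f" "\<forall>a b. dist (f a) (f b) = h * dist a b" "Kset x h \<sigma> s = f ` S0"
      using kuhn_scaled[where s=s and h=h and x=x, OF assms(2) sg sv h] unfolding S0_def by blast
    show "outer_diam (Kset x h \<sigma> s) = h * R0" "inner_diam (Kset x h \<sigma> s) = h * r0"
      unfolding f(3) R0_def r0_def using scale_sim[OF h f(1) _ S0ne S0b] f(2) by auto
  qed
  have h2: "h/2 > 0" using h by simp
  have K2: "inner_diam (Kset x (h/2) \<sigma> s) = (h/2) * r0"
  proof -
    obtain f where f: "surj f" "\<forall>a b. dist (f a) (f b) = (h/2) * dist a b" "Kset x (h/2) \<sigma> s = f ` S0"
      using kuhn_scaled[where s=s and h="h/2" and x=x, OF assms(2) sg sv h2] unfolding S0_def by blast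
    show ?thesis
      unfolding f(3) r0_def using scale_sim[OF h2 f(1) _ S0ne S0b] f(2) by auto
  qed
  define ST where "ST = simplex_of T"
  have sub1: "ST \<subseteq> Kset x h \<sigma> s" unfolding ST_def by (rule good_sub1[OF g])
  have sub2: "Kset x (h/2) \<sigma> s \<subseteq> ST" unfolding ST_def by (rule good_sub2[OF g])
  have STne: "ST \<noteq> {}" using sub2 Kset_ne_bdd(1)[of x "h/2" \<sigma> s] by blast
  have STb: "bounded ST" using sub1 Kset_ne_bdd(2)[of x h \<sigma> s] bounded_subset by blast
  have a1: "outer_diam ST \<le> h * R0" using outer_mono[OF sub1 STne Kset_ne_bdd(2)] K1 by simp
  have a2: "inner_diam ST \<le> h * r0" using inner_mono[OF sub1 STne Kset_ne_bdd(2)] K1 by simp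
  have a3: "(h/2) * r0 \<le> inner_diam ST" using inner_mono[OF sub2 Kset_ne_bdd(1) STb] K2 by simp
  have a4: "0 \<le> outer_diam ST" using outer_nonneg[OF STne STb] .
  have r0n: "0 \<le> r0" unfolding r0_def using inner_nonneg[OF S0ne S0b] .
  have R0n: "0 \<le> R0" unfolding R0_def using outer_nonneg[OF S0ne S0b] .
  show ?thesis
  proof (cases "r0 = 0")
    case True
    then have "inner_diam ST = 0" using a2 a3 by simp
    then show ?thesis unfolding shape_gamma_def S0e ST_def[symmetric] R0_def[symmetric] r0_def[symmetric]
      using True by simp
  next
    case False
    then have r0p: "r0 > 0" using r0n by simp
    then have w: "0 < (h/2) * r0" using h2 by simp
    have "outer_diam ST / inner_diam ST \<le> (h * R0) / ((h/2) * r0)"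
      by (rule frac_le) (use a1 a3 a4 w h R0n in auto)
    also have "\<dots> = 2 * (R0 / r0)" using h r0p by (simp add: field_simps)
    finally show ?thesis unfolding shape_gamma_def S0e ST_def[symmetric] R0_def[symmetric] r0_def[symmetric] .
  qed
qed

end
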